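(* Let $D\subset\mathbb N^n$ be finite, not contained in any coordinate hyperplane, $p$ a prime, $k\ge1$, and let $\mathbf e_{-1},\mathbf e_0,\dots,\mathbf e_{k-1}\in\Sigma_p(D)$ (not necessarily distinct) with $V(\mathbf e_i,\mathbf e_{i-1})\ne\emptyset$ for $0\le i\le k-1$. For every $(V_i)_{0\le i\le k-1}\in\prod_{i=0}^{k-1}V(\mathbf e_i,\mathbf e_{i-1})$, $V_i=(v_{i\mathbf d})_{\mathbf d}$, there is a minimal $U=(u_{\mathbf d})\in E_{D,p}(r)$ for some $r\ge k$ such that for each $\mathbf d$ the remainder of $u_{\mathbf d}$ modulo $p^k$ is $\sum_{i=0}^{k-1}p^iv_{i\mathbf d}$, and $\varphi_U(i)=\mathbf e_{r-1-i}$ for all $r-k\le i\le r$.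
   Context: $s_p$ = base-$p$ digit sum. $E_{D,p}(r)$ = set of $U=(u_{\mathbf d})\in\{0,\dots,p^r-1\}^D$ with $\sum u_{\mathbf d}\mathbf d\equiv0\pmod{p^r-1}$ and all coordinates of $\sum u_{\mathbf d}\mathbf d$ positive; $s_p(U)=\sum s_p(u_{\mathbf d})$; $\delta_p(D)=\frac1{p-1}\min_{r\ge1}\min_{U\in E_{D,p}(r)}s_p(U)/r$; minimal means $s_p(U)=(p-1)r\delta_p(D)$. Shift $\delta_r$: $k\mapsto pk\bmod(p^r-1)$ for $k\le p^r-2$, $p^r-1\mapsto p^r-1$, coordinatewise. $\varphi_U(j)=\frac1{p^r-1}\sum\mathbf d(\delta_r^jU)_{\mathbf d}$ for $j\in\mathbb Z/r\mathbb Z$ (indices mod $r$); irreducible means $\varphi_U$ injective; $MI_{D,p}$ = minimal irreducible elements of all lengths; $\Sigma_p(D)=\bigcup_{U\in MI_{D,p}}\mathrm{Im}\varphi_U$. $\psi(U)=(u_{\mathbf d}\bmod p)_{\mathbf d}$; $V(\mathbf e,\mathbf e')=\{\psi(U):U\in MI_{D,p},\varphi_U(-1)=\mathbf e,\varphi_U(0)=\mathbf e'\}$. *)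

theory Defs
  imports "HOL-Analysis.Finite_Cartesian_Product" "HOL-Computational_Algebra.Primes"
begin

text \<open>Base-p digit sum s_p (for p \<ge> 2 the terms with i beyond the length vanish).\<close>
definition digsum :: "nat \<Rightarrow> nat \<Rightarrow> nat" where
  "digsum p u = (\<Sum>i<Suc u. (u div p ^ i) mod p)"

text \<open>Tuples U = (u_d)_{d \<in> D} are functions on vectors, zero outside D.\<close>
definition Eset :: "(nat ^ 'n) set \<Rightarrow> nat \<Rightarrow> nat \<Rightarrow> ((nat ^ 'n) \<Rightarrow> nat) set" where
  "Eset D p r = {U. (\<forall>d\<in>D. U d \<le> p ^ r - 1) \<and> (\<forall>d. d \<notin> D \<longrightarrow> U d = 0)
      \<and> (\<forall>j. (p ^ r - 1) dvd (\<Sum>d\<in>D. U d * d $ j))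
      \<and> (\<forall>j. 0 < (\<Sum>d\<in>D. U d * d $ j))}"

definition sU :: "(nat ^ 'n) set \<Rightarrow> nat \<Rightarrow> ((nat ^ 'n) \<Rightarrow> nat) \<Rightarrow> nat" where
  "sU D p U = (\<Sum>d\<in>D. digsum p (U d))"

definition delta :: "(nat ^ 'n) set \<Rightarrow> nat \<Rightarrow> real" where
  "delta D p = (1 / (real p - 1)) *
     Inf {real (sU D p U) / real r | r U. r \<ge> 1 \<and> U \<in> Eset D p r}"

definition minimal :: "(nat ^ 'n) set \<Rightarrow> nat \<Rightarrow> nat \<Rightarrow> ((nat ^ 'n) \<Rightarrow> nat) \<Rightarrow> bool" where
  "minimal D p r U \<longleftrightarrow> r \<ge> 1 \<and> U \<in> Eset D p r \<and>
     real (sU D p U) = (real p - 1) * real r * delta D p"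

definition shift :: "nat \<Rightarrow> nat \<Rightarrow> nat \<Rightarrow> nat" where
  "shift p r k = (if k = p ^ r - 1 then k else (p * k) mod (p ^ r - 1))"

definition shiftU :: "nat \<Rightarrow> nat \<Rightarrow> ((nat ^ 'n) \<Rightarrow> nat) \<Rightarrow> ((nat ^ 'n) \<Rightarrow> nat)" where
  "shiftU p r U = (\<lambda>d. shift p r (U d))"

text \<open>phi_U(j) for j in Z/rZ, represented by an integer j taken modulo r.\<close>
definition phi :: "(nat ^ 'n) set \<Rightarrow> nat \<Rightarrow> nat \<Rightarrow> ((nat ^ 'n) \<Rightarrow> nat) \<Rightarrow> int \<Rightarrow> nat ^ 'n" where
  "phi D p r U j = (\<chi> i. (\<Sum>d\<in>D. ((shiftU p r ^^ nat (j mod int r)) U) d * d $ i) div (p ^ r - 1))"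

definition irreducible_U :: "(nat ^ 'n) set \<Rightarrow> nat \<Rightarrow> nat \<Rightarrow> ((nat ^ 'n) \<Rightarrow> nat) \<Rightarrow> bool" where
  "irreducible_U D p r U \<longleftrightarrow> inj_on (phi D p r U) {0..<int r}"

definition MI :: "(nat ^ 'n) set \<Rightarrow> nat \<Rightarrow> (nat \<times> ((nat ^ 'n) \<Rightarrow> nat)) set" where
  "MI D p = {(r, U). minimal D p r U \<and> irreducible_U D p r U}"

definition Sigma_p :: "(nat ^ 'n) set \<Rightarrow> nat \<Rightarrow> (nat ^ 'n) set" where
  "Sigma_p D p = (\<Union>(r, U)\<in>MI D p. range (phi D p r U))"

definition psi :: "nat \<Rightarrow> ((nat ^ 'n) \<Rightarrow> nat) \<Rightarrow> ((nat ^ 'n) \<Rightarrow> nat)" where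
  "psi p U = (\<lambda>d. U d mod p)"

definition Vset :: "(nat ^ 'n) set \<Rightarrow> nat \<Rightarrow> nat ^ 'n \<Rightarrow> nat ^ 'n \<Rightarrow> ((nat ^ 'n) \<Rightarrow> nat) set" where
  "Vset D p e e' = {psi p U | r U. (r, U) \<in> MI D p \<and> phi D p r U (-1) = e \<and> phi D p r U 0 = e'}"

end

theory Submission imports Defs begin


fun numl :: "nat \<Rightarrow> nat list \<Rightarrow> nat" where
  "numl p [] = 0"
| "numl p (a # xs) = a * p ^ length xs + numl p xs"

fun digs :: "nat \<Rightarrow> nat \<Rightarrow> nat \<Rightarrow> nat list" where
  "digs p 0 u = []"
| "digs p (Suc r) u = digs p r (u div p) @ [u mod p]"

lemma numl_append: "numl p (xs @ ys) = numl p xs * p ^ length ys + numl p ys"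
  by (induction xs) (auto simp: algebra_simps power_add)

lemma numl_lt: "\<forall>a\<in>set xs. a < p \<Longrightarrow> numl p xs < p ^ length xs"
proof (induction xs)
  case Nil then show ?case by simp
next
  case (Cons a xs)
  have "numl p (a # xs) < a * p ^ length xs + p ^ length xs" using Cons by simp
  also have "\<dots> = Suc a * p ^ length xs" by simp
  also have "\<dots> \<le> p * p ^ length xs" using Cons.prems by (intro mult_le_mono1) auto
  finally show ?case by simp
qed

lemma numl_zero: "\<forall>a\<in>set xs. a = 0 \<Longrightarrow> numl p xs = 0"
  by (induction xs) auto

lemma length_digs[simp]: "length (digs p r u) = r"
  by (induction r arbitrary: u) auto

lemma digs_lt: "0 < p \<Longrightarrow> \<forall>a\<in>set (digs p r u). a < p"
  by (induction r arbitrary: u) auto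

lemma digs_0: "\<forall>a\<in>set (digs p r 0). a = 0"
  by (induction r) auto

lemma numl_digs: "0 < p \<Longrightarrow> u < p ^ r \<Longrightarrow> numl p (digs p r u) = u"
proof (induction r arbitrary: u)
  case 0 then show ?case by simp
next
  case (Suc r)
  have "u div p < p ^ r" using Suc.prems
    by (simp add: less_mult_imp_div_less mult.commute)
  then show ?case using Suc by (simp add: numl_append)
qed

lemma sum_digs: "(\<Sum>i<n. (u div p ^ i) mod p) = sum_list (digs p n u)"
proof (induction n arbitrary: u)
  case 0 then show ?case by simp
next
  case (Suc n)
  have "(\<Sum>i<Suc n. (u div p ^ i) mod p) = u mod p + (\<Sum>i<n. (u div p ^ Suc i) mod p)"
    by (subst sum.lessThan_Suc_shift) simp
  also have "(\<Sum>i<n. (u div p ^ Suc i) mod p) = (\<Sum>i<n. ((u div p) div p ^ i) mod p)"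
    by (simp add: div_mult2_eq)
  finally show ?case using Suc by simp
qed

lemma sum_upto_eq:
  fixes a b :: nat
  assumes "\<forall>i\<ge>a. f i = (0::nat)" "\<forall>i\<ge>b. f i = 0"
  shows "(\<Sum>i<a. f i) = (\<Sum>i<b. f i)"
proof -
  have "(\<Sum>i<a. f i) = (\<Sum>i<max a b. f i)"
    using assms(1) by (intro sum.mono_neutral_left) (auto simp: not_less)
  moreover have "(\<Sum>i<b. f i) = (\<Sum>i<max a b. f i)"
    using assms(2) by (intro sum.mono_neutral_left) (auto simp: not_less)
  ultimately show ?thesis by simp
qed

lemma digsum_digs:
  assumes "2 \<le> p" "u < p ^ r"
  shows "digsum p u = sum_list (digs p r u)"
proof -
  have a: "u div p ^ i = 0" if "i \<ge> Suc u" for i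
  proof -
    have "u < 2 ^ u" by (rule less_exp)
    also have "\<dots> \<le> p ^ u" using assms by (simp add: power_mono)
    also have "\<dots> \<le> p ^ i" using assms that by (intro power_increasing) auto
    finally show ?thesis by simp
  qed
  have b: "u div p ^ i = 0" if "i \<ge> r" for i
  proof -
    have "p ^ r \<le> p ^ i" using assms that by (intro power_increasing) auto
    then show ?thesis using assms by (intro div_less) linarith
  qed
  have "digsum p u = (\<Sum>i<r. (u div p ^ i) mod p)"
    unfolding digsum_def by (rule sum_upto_eq) (use a b in auto)
  then show ?thesis by (simp add: sum_digs)
qed



lemma shift_rot_aux:
  fixes a nz q p :: nat
  assumes "2 \<le> p" "a < p" "nz < q" "nz * p + a = p * q - 1"
  shows "a * q + nz = p * q - 1"
proof -
  have q: "q \<ge> 1" using assms by simp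
  have pq: "p * q \<ge> 1" using assms q by simp
  have e: "int nz * int p + int a = int p * int q - 1"
  proof -
    have "int (nz * p + a) = int (p * q - 1)" using assms(4) by simp
    then show ?thesis using pq by (simp add: of_nat_diff)
  qed
  have "(int nz * int p + int a) mod int p = int a" using assms by simp
  moreover have "(int p * int q - 1) mod int p = int p - 1"
    using assms by (simp add: mod_diff_eq[symmetric] zmod_minus1)
  ultimately have a: "int a = int p - 1" using e by simp
  then have "int nz * int p = int p * (int q - 1)" using e by (simp add: algebra_simps)
  then have nzq: "int nz = int q - 1" using assms by simp
  have "int a * int q + int nz = (int p - 1) * int q + (int q - 1)" by (simp add: a nzq)
  also have "\<dots> = int p * int q - 1" by (simp add: algebra_simps)
  finally have "int a * int q + int nz = int p * int q - 1" .
  then have "int (a * q + nz) = int (p * q - 1)" using pq by (simp add: of_nat_diff)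
  then show ?thesis by (simp only: of_nat_eq_iff)
qed

lemma shift_rot:
  assumes p: "2 \<le> p" and dig: "\<forall>a\<in>set ys. a < p" and len: "length ys = r" and r: "r \<ge> 1"
  shows "shift p r (numl p ys) = numl p (rotate1 ys)"
proof -
  obtain a zs where ys: "ys = a # zs" using len r by (cases ys) auto
  define q where "q = p ^ (r - 1)"
  have lz: "length zs = r - 1" using ys len by simp
  have pr: "p ^ r = p * q" unfolding q_def using r by (cases r) auto
  have q1: "q \<ge> 1" unfolding q_def using p by simp
  define N where "N = p ^ r - 1"
  have N: "N + 1 = p * q" unfolding N_def using pr p q1 by (simp add: Suc_leI)
  define nz where "nz = numl p zs"
  have nz: "nz < q" unfolding nz_def q_def using dig ys lz numl_lt[of zs p] by simp
  have a: "a < p" using dig ys by simp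
  have u: "numl p ys = a * q + nz" using ys lz by (simp add: q_def nz_def)
  have v: "numl p (rotate1 ys) = nz * p + a" using ys by (simp add: numl_append nz_def)
  have vlt: "numl p (rotate1 ys) < p ^ r" using numl_lt[of "rotate1 ys" p] dig len by simp
  have key: "p * (a * q + nz) = a * N + (nz * p + a)"
  proof -
    have "p * (a * q + nz) = a * (N + 1) + nz * p" using N by (simp add: algebra_simps)
    then show ?thesis by (simp add: algebra_simps)
  qed
  have ult: "a * q + nz < p ^ r" using numl_lt[of ys p] dig len u by simp
  show ?thesis
  proof (cases "a * q + nz = N")
    case True
    have "p * N = a * N + (nz * p + a)" using key True by simp
    then have "nz * p + a = (p - a) * N" by (simp add: diff_mult_distrib)
    moreover have "(p - a) * N \<ge> N"
    proof -
      have "1 \<le> p - a" using a by simp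
      then show ?thesis using mult_le_mono1[of 1 "p-a" N] by simp
    qed
    moreover have "nz * p + a \<le> N" using vlt v N pr by simp
    ultimately have "nz * p + a = N" by linarith
    then show ?thesis using True u v unfolding shift_def N_def by simp
  next
    case False
    have vle: "nz * p + a \<le> N" using vlt v N pr by simp
    have "nz * p + a \<noteq> N"
    proof
      assume "nz * p + a = N"
      then have "a * q + nz = p * q - 1" using shift_rot_aux[OF p a nz] N by simp
      then show False using False N by simp
    qed
    then have "nz * p + a < N" using vle by simp
    then have "(p * (a * q + nz)) mod N = nz * p + a" using key by simp
    then show ?thesis using False u v unfolding shift_def N_def by simp
  qed
qed



definition walk :: "(nat ^ 'n) set \<Rightarrow> nat \<Rightarrow> ((nat ^ 'n) \<Rightarrow> nat list) \<Rightarrow> nat \<Rightarrow> (nat \<Rightarrow> nat ^ 'n) \<Rightarrow> bool" where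
  "walk D p H m x \<longleftrightarrow> (\<forall>d. length (H d) = m) \<and> (\<forall>d. \<forall>a\<in>set (H d). a < p)
     \<and> (\<forall>d. d \<notin> D \<longrightarrow> (\<forall>a\<in>set (H d). a = 0))
     \<and> (\<forall>j<m. \<forall>i. p * x j $ i = x (Suc j) $ i + (\<Sum>d\<in>D. H d ! j * d $ i))"

lemma shiftU_iter:
  assumes p: "2 \<le> p" and r: "r \<ge> 1" and len: "\<forall>d. length (H d) = r"
    and dig: "\<forall>d. \<forall>a\<in>set (H d). a < p"
  shows "(shiftU p r ^^ m) (\<lambda>d. numl p (H d)) = (\<lambda>d. numl p (rotate m (H d)))"
proof (induction m)
  case 0 then show ?case by simp
next
  case (Suc m)
  have "(shiftU p r ^^ Suc m) (\<lambda>d. numl p (H d)) = shiftU p r (\<lambda>d. numl p (rotate m (H d)))"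
    using Suc by simp
  also have "\<dots> = (\<lambda>d. numl p (rotate1 (rotate m (H d))))"
    unfolding shiftU_def
    by (rule ext, rule shift_rot) (use p r len dig in auto)
  finally show ?case by (simp add: rotate_Suc)
qed

lemma phi_rot:
  assumes p: "2 \<le> p" and r: "r \<ge> 1" and len: "\<forall>d. length (H d) = r"
    and dig: "\<forall>d. \<forall>a\<in>set (H d). a < p"
  shows "phi D p r (\<lambda>d. numl p (H d)) (int j) $ i
       = (\<Sum>d\<in>D. numl p (rotate j (H d)) * d $ i) div (p ^ r - 1)"
proof -
  have n: "nat (int j mod int r) = j mod r" by (simp add: zmod_int[symmetric])
  have rr: "rotate (j mod r) (H d) = rotate j (H d)" for d
    using len by (metis rotate_conv_mod)
  show ?thesis unfolding phi_def n shiftU_iter[OF p r len dig] by (simp add: rr)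
qed

lemma rot_step:
  assumes "length ys = r" "r \<ge> 1" "p \<ge> 1"
  shows "p * numl p (rotate j ys) = numl p (rotate (Suc j) ys) + (p ^ r - 1) * (ys ! (j mod r))"
proof -
  have ne: "ys \<noteq> []" using assms by auto
  obtain b ws where zs: "rotate j ys = b # ws" using ne by (cases "rotate j ys") auto
  have b: "b = ys ! (j mod r)" using hd_rotate_conv_nth[OF ne, of j] zs assms by simp
  have lw: "length ws = r - 1" using zs assms by (metis length_Cons length_rotate diff_Suc_1)
  have rs: "rotate (Suc j) ys = ws @ [b]" using zs by (simp add: rotate_Suc)
  have pr: "p ^ r = p * p ^ (r - 1)" using assms by (cases r) auto
  have pr1: "p ^ r \<ge> 1" using assms by simp
  have "p * numl p (rotate j ys) = b * p ^ r + p * numl p ws" using zs lw pr by (simp add: algebra_simps)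
  also have "\<dots> = (numl p ws * p + b) + (p ^ r - 1) * b"
  proof -
    have bb: "b \<le> b * p ^ r" using pr1 by simp
    show ?thesis by (simp add: algebra_simps diff_mult_distrib2) (use bb in linarith)
  qed
  finally show ?thesis using rs b by (simp add: numl_append mult.commute)
qed

definition SS :: "(nat ^ 'n) set \<Rightarrow> nat \<Rightarrow> ((nat ^ 'n) \<Rightarrow> nat list) \<Rightarrow> nat \<Rightarrow> 'n \<Rightarrow> nat" where
  "SS D p H j i = (\<Sum>d\<in>D. numl p (rotate j (H d)) * d $ i)"

lemma SS_step:
  assumes "\<forall>d. length (H d) = r" "r \<ge> 1" "p \<ge> 1"
  shows "p * SS D p H j i = SS D p H (Suc j) i + (p ^ r - 1) * (\<Sum>d\<in>D. H d ! (j mod r) * d $ i)"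
proof -
  have "p * SS D p H j i = (\<Sum>d\<in>D. (p * numl p (rotate j (H d))) * d $ i)"
    unfolding SS_def by (simp add: sum_distrib_left algebra_simps)
  also have "\<dots> = (\<Sum>d\<in>D. numl p (rotate (Suc j) (H d)) * d $ i + (p ^ r - 1) * (H d ! (j mod r) * d $ i))"
    using rot_step[of _ r p j] assms by (intro sum.cong) (auto simp: algebra_simps)
  also have "\<dots> = SS D p H (Suc j) i + (p ^ r - 1) * (\<Sum>d\<in>D. H d ! (j mod r) * d $ i)"
    unfolding SS_def by (simp add: sum.distrib sum_distrib_left)
  finally show ?thesis .
qed



lemma rotate_len_id: "length xs = r \<Longrightarrow> rotate r xs = xs"
  by (metis append_Nil2 rotate_append self_append_conv2)

lemma walk_SS:
  assumes p: "2 \<le> p" and r: "r \<ge> 1" and w: "walk D p H r x" and cyc: "x r = x 0"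
  shows "\<And>j. j \<le> r \<Longrightarrow> SS D p H j i = (p ^ r - 1) * x j $ i"
proof -
  define N where "N = p ^ r - 1"
  have len: "\<forall>d. length (H d) = r" using w unfolding walk_def by simp
  define Dl where "Dl j = int (SS D p H j i) - int N * int (x j $ i)" for j
  have step: "int p * Dl j = Dl (Suc j)" if "j < r" for j
  proof -
    let ?W = "\<Sum>d\<in>D. H d ! j * d $ i"
    have a: "p * SS D p H j i = SS D p H (Suc j) i + N * ?W"
      using SS_step[OF len r, of p D j i] p that unfolding N_def by simp
    have b: "p * x j $ i = x (Suc j) $ i + ?W" using w that unfolding walk_def by blast
    have a': "int p * int (SS D p H j i) = int (SS D p H (Suc j) i) + int N * int ?W"
      using arg_cong[OF a, of int] by simp
    have b': "int p * int (x j $ i) = int (x (Suc j) $ i) + int ?W"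
      using arg_cong[OF b, of int] by simp
    show ?thesis unfolding Dl_def using a' b' by (simp add: algebra_simps)
  qed
  have pw: "Dl j = int p ^ j * Dl 0" if "j \<le> r" for j
    using that
  proof (induction j)
    case 0 then show ?case by simp
  next
    case (Suc j)
    have jr: "j < r" using Suc.prems by simp
    have "Dl (Suc j) = int p * Dl j" using step[OF jr] by simp
    then show ?case using Suc.IH jr by simp
  qed
  have "SS D p H r i = SS D p H 0 i" unfolding SS_def using len by (simp add: rotate_len_id)
  then have "Dl r = Dl 0" unfolding Dl_def using cyc by simp
  then have "(int p ^ r - 1) * Dl 0 = 0" using pw[of r] by (simp add: algebra_simps)
  moreover have "int p ^ r - 1 \<noteq> 0"
  proof -
    have "int p ^ r \<ge> int p ^ 1" using p r by (intro power_increasing) auto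
    then have "int p ^ r \<ge> int p" by simp
    then show ?thesis using p by linarith
  qed
  ultimately have "Dl 0 = 0" by simp
  then have "Dl j = 0" if "j \<le> r" for j using pw[OF that] by simp
  then show "\<And>j. j \<le> r \<Longrightarrow> SS D p H j i = (p ^ r - 1) * x j $ i"
    unfolding Dl_def N_def by (metis eq_iff_diff_eq_0 of_nat_eq_iff of_nat_mult)
qed

lemma walk_phi:
  assumes p: "2 \<le> p" and r: "r \<ge> 1" and w: "walk D p H r x" and cyc: "x r = x 0" and j: "j \<le> r"
  shows "phi D p r (\<lambda>d. numl p (H d)) (int j) = x j"
proof -
  have len: "\<forall>d. length (H d) = r" and dig: "\<forall>d. \<forall>a\<in>set (H d). a < p"
    using w unfolding walk_def by auto
  have N: "p ^ r - 1 > 0"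
  proof -
    have "p ^ r \<ge> p ^ 1" using p r by (intro power_increasing) auto
    then show ?thesis using p by simp
  qed
  show ?thesis
    unfolding vec_eq_iff
  proof (intro allI)
    fix i
    show "phi D p r (\<lambda>d. numl p (H d)) (int j) $ i = x j $ i"
      using phi_rot[OF p r len dig, of D j i] walk_SS[OF p r w cyc j, of i] N
      unfolding SS_def by simp
  qed
qed

lemma walk_sum0:
  assumes p: "2 \<le> p" and r: "r \<ge> 1" and w: "walk D p H r x" and cyc: "x r = x 0"
  shows "(\<Sum>d\<in>D. numl p (H d) * d $ i) = (p ^ r - 1) * x 0 $ i"
  using walk_SS[OF p r w cyc, of 0 i] unfolding SS_def by simp

lemma Eset_walk:
  assumes p: "2 \<le> p" and r: "r \<ge> 1" and U: "U \<in> Eset D p r"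
  shows "walk D p (\<lambda>d. digs p r (U d)) r (\<lambda>j. phi D p r U (int j))"
    and "\<And>d. numl p (digs p r (U d)) = U d"
proof -
  define H where "H d = digs p r (U d)" for d
  have p0: "0 < p" using p by simp
  have Ult: "U d < p ^ r" for d
  proof (cases "d \<in> D")
    case True
    then have "U d \<le> p ^ r - 1" using U unfolding Eset_def by auto
    moreover have "p ^ r > 0" using p by simp
    ultimately show ?thesis by linarith
  next
    case False then show ?thesis using U p unfolding Eset_def by auto
  qed
  show numU: "\<And>d. numl p (digs p r (U d)) = U d" using numl_digs[OF p0 Ult] by simp
  have Ueq: "U = (\<lambda>d. numl p (H d))" unfolding H_def using numU by simp
  have len: "\<forall>d. length (H d) = r" unfolding H_def by simp
  have dig: "\<forall>d. \<forall>a\<in>set (H d). a < p" unfolding H_def using digs_lt[OF p0] by simp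
  have zer: "\<forall>d. d \<notin> D \<longrightarrow> (\<forall>a\<in>set (H d). a = 0)"
    unfolding H_def using U digs_0 unfolding Eset_def by auto
  define N where "N = p ^ r - 1"
  have dv: "N dvd SS D p H j i" for j i
  proof (induction j)
    case 0
    then show ?case using U unfolding SS_def N_def Eset_def using numU H_def by simp
  next
    case (Suc j)
    have "p * SS D p H j i = SS D p H (Suc j) i + N * (\<Sum>d\<in>D. H d ! (j mod r) * d $ i)"
      using SS_step[OF len r, of p D j i] p unfolding N_def by simp
    moreover have "N dvd p * SS D p H j i" using Suc by simp
    ultimately have "N dvd SS D p H (Suc j) i + N * (\<Sum>d\<in>D. H d ! (j mod r) * d $ i)" by simp
    then show ?case by (simp add: dvd_add_left_iff)
  qed
  have ph: "phi D p r U (int j) $ i = SS D p H j i div N" for j i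
    using phi_rot[OF p r len dig, of D j i] unfolding Ueq SS_def N_def by simp
  have rec: "p * phi D p r U (int j) $ i = phi D p r U (int (Suc j)) $ i + (\<Sum>d\<in>D. H d ! j * d $ i)"
    if "j < r" for j i
  proof -
    let ?W = "\<Sum>d\<in>D. H d ! j * d $ i"
    have a: "p * SS D p H j i = SS D p H (Suc j) i + N * ?W"
      using SS_step[OF len r, of p D j i] p that unfolding N_def by simp
    have N0: "N > 0"
    proof -
      have "p ^ r \<ge> p ^ 1" using p r by (intro power_increasing) auto
      then show ?thesis unfolding N_def using p by simp
    qed
    have "p * (SS D p H j i div N) = (p * SS D p H j i) div N"
      using dv by (simp add: div_mult_swap)
    also have "\<dots> = (SS D p H (Suc j) i + ?W * N) div N" using a by (simp add: mult.commute)
    also have "\<dots> = SS D p H (Suc j) i div N + ?W" using N0 by simp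
    finally show ?thesis by (simp only: ph)
  qed
  show "walk D p (\<lambda>d. digs p r (U d)) r (\<lambda>j. phi D p r U (int j))"
    unfolding walk_def using len dig zer rec unfolding H_def by auto
qed



lemma walk_append:
  assumes w1: "walk D p H1 m1 x1" and w2: "walk D p H2 m2 x2" and m: "x1 m1 = x2 0"
  shows "walk D p (\<lambda>d. H1 d @ H2 d) (m1 + m2) (\<lambda>j. if j \<le> m1 then x1 j else x2 (j - m1))"
proof -
  have l1: "\<forall>d. length (H1 d) = m1" and l2: "\<forall>d. length (H2 d) = m2"
    using w1 w2 unfolding walk_def by auto
  have s1: "\<forall>j<m1. \<forall>i. p * x1 j $ i = x1 (Suc j) $ i + (\<Sum>d\<in>D. H1 d ! j * d $ i)"
    using w1 unfolding walk_def by auto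
  have s2: "\<forall>j<m2. \<forall>i. p * x2 j $ i = x2 (Suc j) $ i + (\<Sum>d\<in>D. H2 d ! j * d $ i)"
    using w2 unfolding walk_def by auto
  have st: "p * (if j \<le> m1 then x1 j else x2 (j - m1)) $ i
      = (if Suc j \<le> m1 then x1 (Suc j) else x2 (Suc j - m1)) $ i + (\<Sum>d\<in>D. (H1 d @ H2 d) ! j * d $ i)"
    if j: "j < m1 + m2" for j i
  proof (cases "j < m1")
    case True
    have "(\<Sum>d\<in>D. (H1 d @ H2 d) ! j * d $ i) = (\<Sum>d\<in>D. H1 d ! j * d $ i)"
      using True l1 by (intro sum.cong) (auto simp: nth_append)
    then show ?thesis using True s1 by auto
  next
    case False
    have "(\<Sum>d\<in>D. (H1 d @ H2 d) ! j * d $ i) = (\<Sum>d\<in>D. H2 d ! (j - m1) * d $ i)"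
      using False l1 by (intro sum.cong) (auto simp: nth_append)
    moreover have "(if j \<le> m1 then x1 j else x2 (j - m1)) = x2 (j - m1)" using False m by auto
    moreover have "Suc j - m1 = Suc (j - m1)" using False by simp
    ultimately show ?thesis using False s2 j by auto
  qed
  show ?thesis using w1 w2 st unfolding walk_def by auto
qed

lemma walk_take:
  assumes w: "walk D p H m x" and n: "n \<le> m"
  shows "walk D p (\<lambda>d. take n (H d)) n x"
  using w n unfolding walk_def by (auto dest: in_set_takeD)

lemma take_digs: "take r (digs p (Suc r) u) = digs p r (u div p)"
  by simp

lemma nth_digs_last: "digs p (Suc r) u ! r = u mod p"
  by (simp add: nth_append)

lemma digs_numl:
  assumes "\<forall>a\<in>set xs. a < p"
  shows "digs p (length xs) (numl p xs) = xs"
  using assms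
proof (induction xs rule: rev_induct)
  case Nil then show ?case by simp
next
  case (snoc a xs)
  have "numl p (xs @ [a]) = numl p xs * p + a" by (simp add: numl_append)
  moreover have "a < p" using snoc by simp
  ultimately show ?case using snoc by simp
qed

lemma numl_rev_map: "numl p (rev (map f [0..<k])) = (\<Sum>i<k. p ^ i * f i)"
  by (induction k) (auto simp: algebra_simps)

lemma phi_mod:
  "int a mod int r = b mod int r \<Longrightarrow> phi D p r U (int a) = phi D p r U b"
  unfolding phi_def by simp

lemma phi_last: "r \<ge> 1 \<Longrightarrow> phi D p r U (int (r - 1)) = phi D p r U (-1)"
  by (rule phi_mod) (simp add: of_nat_diff zmod_minus1)

lemma phi_r: "phi D p r U (int r) = phi D p r U 0"
  by (rule phi_mod) simp



lemma walkQ: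
  assumes e: "\<forall>i<k. \<forall>c. p * e (int i) $ c = e (int i - 1) $ c + (\<Sum>d\<in>D. V i d * d $ c)"
    and vl: "\<forall>i<k. \<forall>d. V i d < p" and vz: "\<forall>i<k. \<forall>d. d \<notin> D \<longrightarrow> V i d = 0"
  shows "walk D p (\<lambda>d. rev (map (\<lambda>i. V i d) [0..<k])) k (\<lambda>s. e (int k - 1 - int s))"
proof -
  have nth: "rev (map (\<lambda>i. V i d) [0..<k]) ! j = V (k - 1 - j) d" if "j < k" for j d
    using that by (simp add: rev_nth)
  have st: "p * e (int k - 1 - int j) $ c = e (int k - 1 - int (Suc j)) $ c
      + (\<Sum>d\<in>D. rev (map (\<lambda>i. V i d) [0..<k]) ! j * d $ c)" if j: "j < k" for j c
  proof -
    have i: "k - 1 - j < k" using j by simp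
    have a: "int (k - 1 - j) = int k - 1 - int j" using j by (simp add: of_nat_diff)
    have b: "int (k - 1 - j) - 1 = int k - 1 - int (Suc j)" using a by simp
    show ?thesis using e[rule_format, OF i, of c] nth[OF j] unfolding a b by simp
  qed
  show ?thesis unfolding walk_def using vl vz st by auto
qed



theorem lemma2p16:
  fixes D :: "(nat ^ 'n) set" and p k :: nat
    and e :: "int \<Rightarrow> nat ^ 'n"
    and V :: "nat \<Rightarrow> ((nat ^ 'n) \<Rightarrow> nat)"
  assumes "finite D"
    and "\<forall>j. \<exists>d\<in>D. d $ j \<noteq> 0"
    and "prime p"
    and "k \<ge> 1"
    and "\<forall>i\<in>{-1..int k - 1}. e i \<in> Sigma_p D p"
    and "\<forall>i\<in>{0..int k - 1}. Vset D p (e i) (e (i - 1)) \<noteq> {}"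
    and "\<forall>i<k. V i \<in> Vset D p (e (int i)) (e (int i - 1))"
  shows "\<exists>r\<ge>k. \<exists>U. minimal D p r U
           \<and> (\<forall>d\<in>D. U d mod p ^ k = (\<Sum>i<k. p ^ i * V i d))
           \<and> (\<forall>i\<in>{int r - int k..int r}. phi D p r U i = e (int r - 1 - i))"
proof -
  have p: "2 \<le> p" using assms(3) by (simp add: prime_ge_2_nat)
  have p0: "0 < p" using p by simp
  define c where "c = (real p - 1) * delta D p"
  define Q where "Q i r U \<longleftrightarrow> (r, U) \<in> MI D p \<and> V i = psi p U
      \<and> phi D p r U (-1) = e (int i) \<and> phi D p r U 0 = e (int i - 1)" for i r U
  have "\<forall>i. \<exists>y. i < k \<longrightarrow> Q i (fst y) (snd y)"
  proof
    fix i
    show "\<exists>y. i < k \<longrightarrow> Q i (fst y) (snd y)"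
    proof (cases "i < k")
      case True
      then obtain r U where "V i = psi p U" "(r, U) \<in> MI D p"
        "phi D p r U (-1) = e (int i)" "phi D p r U 0 = e (int i - 1)"
        using assms(7) unfolding Vset_def by blast
      then show ?thesis unfolding Q_def by (intro exI[of _ "(r, U)"]) auto
    qed auto
  qed
  from choice[OF this] obtain f where f: "\<forall>i. i < k \<longrightarrow> Q i (fst (f i)) (snd (f i))" by blast
  define R where "R i = fst (f i)" for i
  define UU where "UU i = snd (f i)" for i
  have Qi: "Q i (R i) (UU i)" if "i < k" for i using f that unfolding R_def UU_def by auto
  have R1: "R i \<ge> 1" and UE: "UU i \<in> Eset D p (R i)"
    and Us: "real (sU D p (UU i)) = (real p - 1) * real (R i) * delta D p"
    and Vi: "V i = (\<lambda>d. UU i d mod p)"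
    and ph1: "phi D p (R i) (UU i) (-1) = e (int i)"
    and ph0: "phi D p (R i) (UU i) 0 = e (int i - 1)" if "i < k" for i
    using Qi[OF that] unfolding Q_def MI_def minimal_def psi_def by auto
  have Wi: "walk D p (\<lambda>d. digs p (R i) (UU i d)) (R i) (\<lambda>j. phi D p (R i) (UU i) (int j))"
    if "i < k" for i using Eset_walk(1)[OF p R1[OF that] UE[OF that]] .
  have Rsuc: "R i = Suc (R i - 1)" if "i < k" for i using R1[OF that] by simp
  have digR: "digs p (R i) u = digs p (R i - 1) (u div p) @ [u mod p]" if ik: "i < k" for i u
  proof -
    obtain r' where "R i = Suc r'" using R1[OF ik] by (cases "R i") auto
    then show ?thesis by simp
  qed
  have Ri: "walk D p (\<lambda>d. digs p (R i - 1) (UU i d div p)) (R i - 1) (\<lambda>j. phi D p (R i) (UU i) (int j))"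
    if "i < k" for i
  proof -
    have "walk D p (\<lambda>d. take (R i - 1) (digs p (R i) (UU i d))) (R i - 1) (\<lambda>j. phi D p (R i) (UU i) (int j))"
      using walk_take[OF Wi[OF that], of "R i - 1"] by simp
    moreover have "take (R i - 1) (digs p (R i) (UU i d)) = digs p (R i - 1) (UU i d div p)" for d
      using digR[OF that] by simp
    ultimately show ?thesis by simp
  qed
  have Ri0: "phi D p (R i) (UU i) (int 0) = e (int i - 1)" if "i < k" for i
    using ph0[OF that] by simp
  have Rilast: "phi D p (R i) (UU i) (int (R i - 1)) = e (int i)" if "i < k" for i
    using ph1[OF that] phi_last[OF R1[OF that], of D p "UU i"] by (simp only:)
  have edge: "\<forall>i<k. \<forall>c. p * e (int i) $ c = e (int i - 1) $ c + (\<Sum>d\<in>D. V i d * d $ c)"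
  proof (intro allI impI)
    fix i c assume ik: "i < k"
    have lt: "R i - 1 < R i" using R1[OF ik] by simp
    have "p * phi D p (R i) (UU i) (int (R i - 1)) $ c = phi D p (R i) (UU i) (int (Suc (R i - 1))) $ c
        + (\<Sum>d\<in>D. digs p (R i) (UU i d) ! (R i - 1) * d $ c)"
      using Wi[OF ik] lt unfolding walk_def by blast
    moreover have "int (Suc (R i - 1)) = int (R i)" using R1[OF ik] by simp
    moreover have "digs p (R i) (UU i d) ! (R i - 1) = V i d" for d
      using digR[OF ik] Vi[OF ik] lt by (simp add: nth_append)
    ultimately show "p * e (int i) $ c = e (int i - 1) $ c + (\<Sum>d\<in>D. V i d * d $ c)"
      using Rilast[OF ik] phi_r[of D p "R i" "UU i"] ph0[OF ik] by simp
  qed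
  have vl: "\<forall>i<k. \<forall>d. V i d < p" using Vi p0 by simp
  have vz: "\<forall>i<k. \<forall>d. d \<notin> D \<longrightarrow> V i d = 0" using Vi UE unfolding Eset_def by simp
  have sumi: "real (\<Sum>d\<in>D. sum_list (digs p (R i - 1) (UU i d div p))) + real (\<Sum>d\<in>D. V i d)
      = c * real (R i)" if ik: "i < k" for i
  proof -
    have lt: "UU i d < p ^ R i" for d
    proof (cases "d \<in> D")
      case True
      then have "UU i d \<le> p ^ R i - 1" using UE[OF ik] unfolding Eset_def by auto
      moreover have "p ^ R i > 0" using p by simp
      ultimately show ?thesis by linarith
    next
      case False then show ?thesis using UE[OF ik] p unfolding Eset_def by auto
    qed
    have "sU D p (UU i) = (\<Sum>d\<in>D. sum_list (digs p (R i) (UU i d)))"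
      unfolding sU_def using digsum_digs[OF p lt] by simp
    also have "\<dots> = (\<Sum>d\<in>D. sum_list (digs p (R i - 1) (UU i d div p)) + V i d)"
      using digR[OF ik] Vi[OF ik] by (intro sum.cong refl) simp
    finally show ?thesis using Us[OF ik] unfolding c_def by (simp add: sum.distrib algebra_simps)
  qed
  have P: "\<exists>HP mP xP. walk D p HP mP xP \<and> xP 0 = e (-1) \<and> xP mP = e (int t - 1)
      \<and> real (\<Sum>d\<in>D. sum_list (HP d)) + real (\<Sum>i<t. \<Sum>d\<in>D. V i d) = c * real (mP + t)"
    if "t \<le> k" for t
    using that
  proof (induction t)
    case 0
    have "walk D p (\<lambda>d. []) 0 (\<lambda>_. e (-1))" unfolding walk_def by simp
    then show ?case by (intro exI[of _ "\<lambda>d. []"] exI[of _ 0] exI[of _ "\<lambda>_. e (-1)"]) simp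
  next
    case (Suc t)
    then have tk: "t < k" by simp
    obtain HP mP xP where w: "walk D p HP mP xP" and x0: "xP 0 = e (-1)" and xm: "xP mP = e (int t - 1)"
      and s: "real (\<Sum>d\<in>D. sum_list (HP d)) + real (\<Sum>i<t. \<Sum>d\<in>D. V i d) = c * real (mP + t)"
      using Suc by auto
    define H2 where "H2 d = digs p (R t - 1) (UU t d div p)" for d
    define x2 where "x2 j = phi D p (R t) (UU t) (int j)" for j
    have w2: "walk D p H2 (R t - 1) x2" using Ri[OF tk] unfolding H2_def x2_def .
    have m: "xP mP = x2 0" using xm Ri0[OF tk] unfolding x2_def by simp
    let ?H = "\<lambda>d. HP d @ H2 d"
    let ?x = "\<lambda>j. if j \<le> mP then xP j else x2 (j - mP)"
    have W: "walk D p ?H (mP + (R t - 1)) ?x" by (rule walk_append[OF w w2 m])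
    have e1: "?x 0 = e (-1)" using x0 by simp
    have e2: "?x (mP + (R t - 1)) = e (int (Suc t) - 1)"
    proof (cases "R t - 1 = 0")
      case True
      then have "?x (mP + (R t - 1)) = x2 0" using m by simp
      also have "\<dots> = x2 (R t - 1)" using True by simp
      finally show ?thesis using Rilast[OF tk] unfolding x2_def by simp
    next
      case False
      then have nle: "\<not> mP + (R t - 1) \<le> mP" by simp
      have "?x (mP + (R t - 1)) = x2 (mP + (R t - 1) - mP)" by (rule if_not_P[OF nle])
      then have "?x (mP + (R t - 1)) = x2 (R t - 1)" by (simp only: diff_add_inverse)
      then show ?thesis using Rilast[OF tk] unfolding x2_def by simp
    qed
    have "real (\<Sum>d\<in>D. sum_list (?H d)) + real (\<Sum>i<Suc t. \<Sum>d\<in>D. V i d)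
        = (real (\<Sum>d\<in>D. sum_list (HP d)) + real (\<Sum>i<t. \<Sum>d\<in>D. V i d))
          + (real (\<Sum>d\<in>D. sum_list (H2 d)) + real (\<Sum>d\<in>D. V t d))"
      by (simp add: sum.distrib)
    also have "\<dots> = c * real (mP + t) + c * real (R t)" using s sumi[OF tk] unfolding H2_def by simp
    also have "\<dots> = c * real (mP + (R t - 1) + Suc t)" using R1[OF tk]
      by (simp add: algebra_simps of_nat_diff)
    finally show ?case using W e1 e2 by blast
  qed
  obtain HP mP xP where w: "walk D p HP mP xP" and x0: "xP 0 = e (-1)" and xm: "xP mP = e (int k - 1)"
    and s: "real (\<Sum>d\<in>D. sum_list (HP d)) + real (\<Sum>i<k. \<Sum>d\<in>D. V i d) = c * real (mP + k)"
    using P[of k] by auto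
  define HQ where "HQ d = rev (map (\<lambda>i. V i d) [0..<k])" for d
  define xQ where "xQ s = e (int k - 1 - int s)" for s
  have wQ: "walk D p HQ k xQ" using walkQ[OF edge vl vz] unfolding HQ_def xQ_def .
  have m: "xP mP = xQ 0" using xm unfolding xQ_def by simp
  define H where "H d = HP d @ HQ d" for d
  define x where "x j = (if j \<le> mP then xP j else xQ (j - mP))" for j
  define r where "r = mP + k"
  have W: "walk D p H r x" unfolding H_def x_def r_def by (rule walk_append[OF w wQ m])
  have r1: "r \<ge> 1" using assms(4) unfolding r_def by simp
  have xr: "x r = x 0" using x0 assms(4) unfolding x_def r_def xQ_def by simp
  define U where "U d = numl p (H d)" for d
  have len: "\<forall>d. length (H d) = r" and dig: "\<forall>d. \<forall>a\<in>set (H d). a < p"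
    and zer: "\<forall>d. d \<notin> D \<longrightarrow> (\<forall>a\<in>set (H d). a = 0)"
    using W unfolding walk_def by auto
  have Ult: "U d < p ^ r" for d unfolding U_def using numl_lt[of "H d" p] dig len by simp
  have U0: "U d = 0" if "d \<notin> D" for d unfolding U_def using numl_zero zer that by blast
  define N where "N = p ^ r - 1"
  have Usum: "(\<Sum>d\<in>D. U d * d $ i) = N * x 0 $ i" for i
    unfolding U_def N_def using walk_sum0[OF p r1 W xr] by simp
  have k0: "0 < k" using assms(4) by simp
  have epos: "0 < e (-1) $ i" for i
  proof -
    define N0 where "N0 = p ^ R 0 - 1"
    define S where "S = (\<Sum>d\<in>D. UU 0 d * d $ i)"
    have "e (-1) = phi D p (R 0) (UU 0) 0" using ph0[OF k0] by simp
    then have ei: "e (-1) $ i = S div N0" unfolding phi_def S_def N0_def by simp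
    have "0 < S" "N0 dvd S" using UE[OF k0] unfolding Eset_def S_def N0_def by auto
    then have "0 < S div N0" by (auto elim!: dvdE)
    then show ?thesis using ei by simp
  qed
  have N0: "N > 0"
  proof -
    have "p ^ r \<ge> p ^ 1" using p r1 by (intro power_increasing) auto
    then show ?thesis unfolding N_def using p by simp
  qed
  have inE: "U \<in> Eset D p r"
    unfolding Eset_def
  proof (intro CollectI conjI allI ballI impI)
    fix d assume "d \<in> D" then show "U d \<le> p ^ r - 1" using Ult[of d] by simp
  next
    fix d assume "d \<notin> D" then show "U d = 0" by (rule U0)
  next
    fix j show "(p ^ r - 1) dvd (\<Sum>d\<in>D. U d * d $ j)" using Usum unfolding N_def by simp
  next
    fix j show "0 < (\<Sum>d\<in>D. U d * d $ j)" using Usum[of j] N0 epos[of j] x0 unfolding x_def by simp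
  qed
  have dsum: "digsum p (U d) = sum_list (H d)" for d
  proof -
    have "digsum p (U d) = sum_list (digs p r (U d))" using digsum_digs[OF p Ult] .
    also have "digs p r (U d) = H d" unfolding U_def using digs_numl[of "H d" p] dig len by simp
    finally show ?thesis .
  qed
  have sQ: "(\<Sum>d\<in>D. sum_list (HQ d)) = (\<Sum>i<k. \<Sum>d\<in>D. V i d)"
  proof -
    have "sum_list (HQ d) = (\<Sum>i<k. V i d)" for d
      unfolding HQ_def sum_list_rev by (simp add: sum_set_upt_conv_sum_list_nat[symmetric] atLeast0LessThan)
    then show ?thesis by simp (rule sum.swap)
  qed
  have "real (sU D p U) = real (\<Sum>d\<in>D. sum_list (HP d)) + real (\<Sum>d\<in>D. sum_list (HQ d))"
    unfolding sU_def dsum H_def by (simp add: sum.distrib)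
  also have "\<dots> = c * real r" using s sQ unfolding r_def by simp
  finally have sUr: "real (sU D p U) = (real p - 1) * real r * delta D p" unfolding c_def by simp
  have mini: "minimal D p r U" unfolding minimal_def using r1 inE sUr by simp
  have low: "U d mod p ^ k = (\<Sum>i<k. p ^ i * V i d)" for d
  proof -
    have lq: "length (HQ d) = k" unfolding HQ_def by simp
    have dq: "\<forall>a\<in>set (HQ d). a < p" unfolding HQ_def using vl by auto
    have "numl p (HQ d) < p ^ k" using numl_lt[OF dq] lq by simp
    then have "U d mod p ^ k = numl p (HQ d)" unfolding U_def H_def
      by (simp add: numl_append lq)
    then show ?thesis unfolding HQ_def by (simp add: numl_rev_map)
  qed
  have phis: "phi D p r U i = e (int r - 1 - i)" if i: "i \<in> {int r - int k..int r}" for i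
  proof -
    define j where "j = nat i"
    have ij: "i = int j" and jr: "j \<le> r" and jm: "mP \<le> j" using i unfolding j_def r_def by auto
    have "phi D p r U (int j) = x j" unfolding U_def by (rule walk_phi[OF p r1 W xr jr])
    also have "x j = e (int r - 1 - int j)"
    proof (cases "j = mP")
      case True then show ?thesis using xm unfolding x_def r_def by simp
    next
      case False
      then have "x j = xQ (j - mP)" using jm unfolding x_def by simp
      moreover have "int k - 1 - int (j - mP) = int r - 1 - int j" using jm unfolding r_def by (simp add: of_nat_diff)
      ultimately show ?thesis unfolding xQ_def by simp
    qed
    finally show ?thesis using ij by simp
  qed
  have "r \<ge> k" unfolding r_def by simp
  then show ?thesis using mini low phis by blast
qed


end
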